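(* Let $\theta^{\circ}_1,\dots,\theta^{\circ}_m\in\mathbb{S}^{d-1}$ be pairwise orthogonal, let $a,b$ be as below, and for $x\in\mathbb{S}^{d-1}$ define $$q(x)=ad\sum_{j=1}^m\sigma(\langle\theta^{\circ}_j,x\rangle)+bd\sum_{j_1=1}^m\sum_{j_2=1}^m\langle\theta^{\circ}_{j_1},x\rangle\mathbb{1}\{\langle\theta^{\circ}_{j_2},x\rangle\ge0\}$$ (equivalently $q(x)=(x^\top\mathbb{1}\{\langle\theta^{\circ}_1,x\rangle\ge0\},\dots,x^\top\mathbb{1}\{\langle\theta^{\circ}_m,x\rangle\ge0\})\,\big(\mathbb{E}[\tfrac1nX_0X_0^\top]\big)^{-1}(\theta^{\circ}_1;\dots;\theta^{\circ}_m)$). Then $0\le q(x)\le(a-bm)d\sqrt m$ for every $x\in\mathbb{S}^{d-1}$.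
   Context: $\sigma(u)=\max\{u,0\}$; $a=\frac{2\pi(\pi m+\pi+2)}{D}$, $b=-\frac{2\pi^2}{D}$ with $D=2\pi m^2+(\pi^2-2\pi+4)m+\pi^2+4\pi-4$. $X_0\in\mathbb{R}^{md\times n}$ has $i$-th column $(x_i\mathbb{1}\{\langle\theta^{\circ}_1,x_i\rangle\ge0\};\dots;x_i\mathbb{1}\{\langle\theta^{\circ}_m,x_i\rangle\ge0\})$ with $x_i$ i.i.d. uniform on $\mathbb{S}^{d-1}$. *)

theory Defs
  imports "HOL-Analysis.Analysis"
begin

definition relu :: "real \<Rightarrow> real" where
  "relu u = max u 0"

definition coefD :: "nat \<Rightarrow> real" where
  "coefD m = 2 * pi * (real m)^2 + (pi^2 - 2 * pi + 4) * real m + pi^2 + 4 * pi - 4"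

definition coefA :: "nat \<Rightarrow> real" where
  "coefA m = 2 * pi * (pi * real m + pi + 2) / coefD m"

definition coefB :: "nat \<Rightarrow> real" where
  "coefB m = - (2 * pi^2) / coefD m"

definition qfun :: "nat \<Rightarrow> (nat \<Rightarrow> real^'d) \<Rightarrow> real^'d \<Rightarrow> real" where
  "qfun m \<theta> x =
     coefA m * real CARD('d) * (\<Sum>j\<in>{1..m}. relu (\<theta> j \<bullet> x))
   + coefB m * real CARD('d) * (\<Sum>j1\<in>{1..m}. \<Sum>j2\<in>{1..m}.
        (\<theta> j1 \<bullet> x) * (if \<theta> j2 \<bullet> x \<ge> 0 then 1 else 0))"

end

theory Submission
  imports Defs
begin

theorem mainTheorem6:
  fixes m :: nat and \<theta> :: "nat \<Rightarrow> real^'d" and x :: "real^'d"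
  assumes unit: "\<And>j. j \<in> {1..m} \<Longrightarrow> norm (\<theta> j) = 1"
    and orth: "\<And>j k. j \<in> {1..m} \<Longrightarrow> k \<in> {1..m} \<Longrightarrow> j \<noteq> k \<Longrightarrow> \<theta> j \<bullet> \<theta> k = 0"
    and xunit: "norm x = 1"
  shows "0 \<le> qfun m \<theta> x \<and>
         qfun m \<theta> x \<le> (coefA m - coefB m * real m) * real CARD('d) * sqrt (real m)"
proof -
  define I where "I = {1..m}"
  define t where "t j = \<theta> j \<bullet> x" for j
  define P where "P = (\<Sum>j\<in>I. relu (t j))"
  define N where "N = (\<Sum>j\<in>I. relu (- t j))"
  define k where "k = (\<Sum>j\<in>I. (if t j \<ge> 0 then 1 else 0::real))"
  define a where "a = coefA m"
  define b where "b = coefB m"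
  define d where "d = real CARD('d)"
  have fin: "finite I" and cardI: "card I = m" by (auto simp: I_def)
  have P0: "P \<ge> 0" unfolding P_def relu_def by (intro sum_nonneg) auto
  have N0: "N \<ge> 0" unfolding N_def relu_def by (intro sum_nonneg) auto
  have k0: "k \<ge> 0" unfolding k_def by (intro sum_nonneg) auto
  have km: "k \<le> real m"
  proof -
    have "k \<le> (\<Sum>j\<in>I. 1)" unfolding k_def by (intro sum_mono) auto
    thus ?thesis using cardI by simp
  qed
  have d0: "d \<ge> 0" by (simp add: d_def)
  have D0: "coefD m > 0"
  proof -
    have "pi^2 - 2*pi + 4 = (pi - 1)^2 + 3" by (simp add: power2_eq_square algebra_simps)
    hence "pi^2 - 2*pi + 4 > 0" by (smt (verit) zero_le_power2)
    moreover have "pi^2 + 4*pi - 4 > 0" using pi_gt3 by (smt (verit) zero_le_power2)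
    ultimately show ?thesis unfolding coefD_def
      by (smt (verit) mult_nonneg_nonneg of_nat_0_le_iff zero_le_power2 pi_gt_zero)
  qed
  have a0: "a \<ge> 0" unfolding a_def coefA_def using D0 pi_gt_zero
    by (intro divide_nonneg_pos) auto
  have b0: "b \<le> 0" unfolding b_def coefB_def using D0 by (simp add: divide_nonpos_pos)
  have abm: "a + b * real m \<ge> 0"
  proof -
    have "a + b * real m = 2*pi*(pi+2) / coefD m"
      unfolding a_def b_def coefA_def coefB_def using D0
      by (simp add: field_simps power2_eq_square)
    thus ?thesis using D0 pi_gt_zero by simp
  qed
  have abk: "a + b * k \<ge> 0"
  proof -
    have "b * real m \<le> b * k" using b0 km by (simp add: mult_left_mono_neg)
    thus ?thesis using abm by simp
  qed
  have tsplit: "t j = relu (t j) - relu (- t j)" for j by (simp add: relu_def)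
  have S: "(\<Sum>j\<in>I. t j) = P - N"
    unfolding P_def N_def sum_subtractf[symmetric] by (rule sum.cong) (auto simp: relu_def)
  have absS: "(\<Sum>j\<in>I. \<bar>t j\<bar>) = P + N"
    unfolding P_def N_def sum.distrib[symmetric] by (rule sum.cong) (auto simp: relu_def)
  have double: "(\<Sum>j1\<in>I. \<Sum>j2\<in>I. t j1 * (if t j2 \<ge> 0 then 1 else 0)) = (P - N) * k"
    unfolding S[symmetric] k_def by (simp add: sum_product)
  have q: "qfun m \<theta> x = d * (a * P + b * ((P - N) * k))"
    unfolding qfun_def double[unfolded t_def I_def] P_def[unfolded t_def I_def]
      a_def b_def d_def by (simp add: algebra_simps)
  have bessel: "(\<Sum>j\<in>I. (t j)^2) \<le> 1"
  proof -
    define y where "y = (\<Sum>j\<in>I. t j *\<^sub>R \<theta> j)"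
    have th: "\<theta> i \<bullet> \<theta> j = (if i = j then 1 else 0)" if "i \<in> I" "j \<in> I" for i j
      using that unit[of i] orth[of i j] by (auto simp: I_def dot_square_norm)
    have yx: "y \<bullet> x = (\<Sum>j\<in>I. (t j)^2)"
      unfolding y_def by (simp add: inner_sum_left t_def power2_eq_square)
    have yy: "y \<bullet> y = (\<Sum>j\<in>I. (t j)^2)"
    proof -
      have "y \<bullet> y = (\<Sum>i\<in>I. \<Sum>j\<in>I. t i * t j * (\<theta> i \<bullet> \<theta> j))"
        unfolding y_def by (simp add: inner_sum_left inner_sum_right algebra_simps sum_distrib_left)
          (intro sum.cong refl, simp add: inner_commute)
      also have "\<dots> = (\<Sum>i\<in>I. \<Sum>j\<in>I. if i = j then t i * t j else 0)"
        by (intro sum.cong refl) (simp add: th)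
      also have "\<dots> = (\<Sum>i\<in>I. (t i)^2)"
        using fin by (simp add: power2_eq_square)
      finally show ?thesis .
    qed
    have "0 \<le> (x - y) \<bullet> (x - y)" by simp
    also have "\<dots> = x \<bullet> x - 2 * (y \<bullet> x) + y \<bullet> y"
      by (simp add: inner_diff_left inner_diff_right inner_commute)
    also have "x \<bullet> x = 1" using xunit by (simp add: dot_square_norm)
    finally show ?thesis using yx yy by simp
  qed
  have PN: "P + N \<le> sqrt (real m)"
  proof -
    have "(P + N)^2 \<le> (\<Sum>j\<in>I. \<bar>t j\<bar>^2) * card I"
      unfolding absS[symmetric] by (rule sum_squared_le_sum_of_squares)
    also have "\<dots> \<le> real m" using bessel cardI mult_right_mono[OF bessel, of "real m"] by simp
    finally have "(P+N)^2 \<le> real m" .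
    thus ?thesis using P0 N0 real_le_rsqrt by blast
  qed
  have lower: "0 \<le> a * P + b * ((P - N) * k)"
  proof -
    have "a * P + b * ((P - N) * k) = (a + b*k) * P + (- b) * k * N" by (simp add: algebra_simps)
    moreover have "(a + b*k) * P \<ge> 0" using abk P0 by simp
    moreover have "(- b) * k * N \<ge> 0" using b0 k0 N0 by (intro mult_nonneg_nonneg) auto
    ultimately show ?thesis by linarith
  qed
  have upper: "a * P + b * ((P - N) * k) \<le> (a - b * real m) * sqrt (real m)"
  proof -
    have e: "a * P + b * ((P - N) * k) = a * P + b * k * P + (- b) * k * N" by (simp add: algebra_simps)
    have 1: "b * k * P \<le> 0" using b0 k0 P0 by (simp add: mult_nonpos_nonneg mult_nonpos_nonneg[of "b*k"])
    have 2: "(- b) * k * N \<le> (- b) * real m * N"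
      using b0 km N0 by (intro mult_right_mono mult_left_mono) auto
    have 3: "a * P + (- b) * real m * N \<le> (a - b * real m) * (P + N)"
    proof -
      have "P * (b * real m) \<le> 0" using P0 b0 by (intro mult_nonneg_nonpos mult_nonpos_nonneg) auto
      moreover have "N * a \<ge> 0" using N0 a0 by simp
      ultimately show ?thesis by (simp add: algebra_simps)
    qed
    have 4: "(a - b * real m) * (P + N) \<le> (a - b * real m) * sqrt (real m)"
    proof -
      have "b * real m \<le> 0" using b0 by (intro mult_nonpos_nonneg) auto
      thus ?thesis using PN a0 by (intro mult_left_mono) auto
    qed
    show ?thesis using e 1 2 3 4 by linarith
  qed
  have l2: "0 \<le> d * (a * P + b * ((P - N) * k))" using lower d0 by simp
  have u2: "d * (a * P + b * ((P - N) * k)) \<le> (a - b * real m) * d * sqrt (real m)"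
    using mult_left_mono[OF upper d0] by (simp add: algebra_simps)
  show ?thesis unfolding q using l2 u2 by (simp add: a_def b_def d_def)
qed

end
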